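(* Let $G=\mathrm{SL}_2(\mathbb{R})$ act continuously (the map $G\times X\to X$ is continuous) by isometries on a metric space $X$, and let $x_0\in X$. Then either $x_0$ is fixed by all of $G$, or the stabilizer $G_{x_0}$ is compact. *)

theory Defs
  imports "HOL-Analysis.Analysis"
begin

text \<open>The group SL_2(R), realised as the set of real 2x2 matrices of determinant 1,
  with matrix multiplication as group law and the subspace topology of real^2^2.\<close>
definition SL2 :: "(real^2^2) set" where
  "SL2 = {A. det A = 1}"

definition continuous_isometric_SL2_action :: "(real^2^2 \<Rightarrow> 'x::metric_space \<Rightarrow> 'x) \<Rightarrow> bool" where
  "continuous_isometric_SL2_action act \<longleftrightarrow>
     (\<forall>x. act (mat 1) x = x) \<and>
     (\<forall>g\<in>SL2. \<forall>h\<in>SL2. \<forall>x. act (g ** h) x = act g (act h x)) \<and>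
     (\<forall>g\<in>SL2. \<forall>x y. dist (act g x) (act g y) = dist x y) \<and>
     continuous_on (SL2 \<times> UNIV) (\<lambda>(g, x). act g x)"

definition stabilizer :: "(real^2^2 \<Rightarrow> 'x \<Rightarrow> 'x) \<Rightarrow> 'x \<Rightarrow> (real^2^2) set" where
  "stabilizer act x0 = {g \<in> SL2. act g x0 = x0}"

end

theory Submission
  imports Defs
begin


definition mk :: "real \<Rightarrow> real \<Rightarrow> real \<Rightarrow> real \<Rightarrow> real^2^2" where
  "mk a b c d = (\<chi> i j. if i = 1 then (if j = 1 then a else b) else (if j = 1 then c else d))"

lemma mk_nth[simp]: "mk a b c d $ 1 $ 1 = a" "mk a b c d $ 1 $ 2 = b"
  "mk a b c d $ 2 $ 1 = c" "mk a b c d $ 2 $ 2 = d"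
  by (simp_all add: mk_def)

lemma mk_eq_iff: "mk a b c d = mk a' b' c' d' \<longleftrightarrow> a = a' \<and> b = b' \<and> c = c' \<and> d = d'"
  by (metis mk_nth)

lemma mk_eta: "A = mk (A$1$1) (A$1$2) (A$2$1) (A$2$2)"
  by (simp add: vec_eq_iff forall_2)

lemma mk_mult: "mk a b c d ** mk e f g h = mk (a*e+b*g) (a*f+b*h) (c*e+d*g) (c*f+d*h)"
  by (simp add: vec_eq_iff forall_2 matrix_matrix_mult_def sum_2)

lemma det_mk: "det (mk a b c d) = a*d - b*c"
  by (simp add: det_2)

lemma mat1_mk: "mat 1 = mk 1 0 0 1"
  by (simp add: vec_eq_iff forall_2 mat_def)

lemma SL2_mk: "mk a b c d \<in> SL2 \<longleftrightarrow> a*d - b*c = 1"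
  by (simp add: SL2_def det_mk)

lemma norm_mk: "norm (mk a b c d) = sqrt (a^2+b^2+c^2+d^2)"
  by (simp add: norm_vec_def L2_set_def sum_2 power2_eq_square add.assoc)

lemma mk_tendsto:
  assumes "(A \<longlongrightarrow> a) F" "(B \<longlongrightarrow> b) F" "(C \<longlongrightarrow> c) F" "(D \<longlongrightarrow> d) F"
  shows "((\<lambda>n. mk (A n) (B n) (C n) (D n)) \<longlongrightarrow> mk a b c d) F"
  unfolding mk_def using assms by (intro tendsto_vec_lambda) (auto intro: tendsto_intros)



locale sl2act =
  fixes act :: "real^2^2 \<Rightarrow> 'x::metric_space \<Rightarrow> 'x"
  assumes A: "continuous_isometric_SL2_action act"
begin

lemma one[simp]: "act (mat 1) x = x" using A unfolding continuous_isometric_SL2_action_def by blast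
lemma mult: "g \<in> SL2 \<Longrightarrow> h \<in> SL2 \<Longrightarrow> act (g ** h) x = act g (act h x)"
  using A unfolding continuous_isometric_SL2_action_def by blast
lemma iso: "g \<in> SL2 \<Longrightarrow> dist (act g x) (act g y) = dist x y"
  using A unfolding continuous_isometric_SL2_action_def by blast
lemma cont: "continuous_on (SL2 \<times> UNIV) (\<lambda>(g, x). act g x)"
  using A unfolding continuous_isometric_SL2_action_def by blast

lemma cont_seq:
  assumes "\<And>n. M n \<in> SL2" "M \<longlonglongrightarrow> L" "L \<in> SL2"
  shows "(\<lambda>n. act (M n) y) \<longlonglongrightarrow> act L y"
proof -
  have "((\<lambda>n. (\<lambda>(g, x). act g x) (M n, y)) \<longlongrightarrow> (\<lambda>(g, x). act g x) (L, y)) sequentially"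
    apply (rule continuous_on_tendsto_compose[OF cont])
    using assms by (auto intro!: tendsto_intros)
  then show ?thesis by simp
qed

lemma cont_on: "continuous_on SL2 (\<lambda>g. act g y)"
proof -
  have "continuous_on SL2 ((\<lambda>(g, x). act g x) \<circ> (\<lambda>g. (g, y)))"
    by (rule continuous_on_compose) (auto intro!: continuous_intros continuous_on_subset[OF cont])
  then show ?thesis by (simp add: o_def)
qed

lemma key:
  assumes "\<forall>s. act (mk 1 0 s 1) y = y" "e \<noteq> 0" "t \<noteq> 0"
  shows "dist (act (mk t e 0 (1/t)) y) y = dist (act (mk 1 e 0 1) y) y"
proof -
  define s where "s = (1/t - 1)/e"
  define s' where "s' = (t - 1)/e"
  have eq: "mk 1 0 s 1 ** (mk 1 e 0 1 ** mk 1 0 s' 1) = mk t e 0 (1/t)"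
    using assms by (simp add: mk_mult mk_eq_iff s_def s'_def field_simps)
  have "act (mk t e 0 (1/t)) y = act (mk 1 0 s 1) (act (mk 1 e 0 1) (act (mk 1 0 s' 1) y))"
    using mult[of "mk 1 0 s 1" "mk 1 e 0 1 ** mk 1 0 s' 1"] mult[of "mk 1 e 0 1" "mk 1 0 s' 1"]
    unfolding eq[symmetric] by (simp add: SL2_mk mk_mult)
  also have "\<dots> = act (mk 1 0 s 1) (act (mk 1 e 0 1) y)" using assms by simp
  finally have "dist (act (mk t e 0 (1/t)) y) y = dist (act (mk 1 0 s 1) (act (mk 1 e 0 1) y)) (act (mk 1 0 s 1) y)"
    using assms by simp
  also have "\<dots> = dist (act (mk 1 e 0 1) y) y" by (rule iso) (simp add: SL2_mk)
  finally show ?thesis .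
qed

lemma diag_fix:
  assumes "\<forall>s. act (mk 1 0 s 1) y = y" "t \<noteq> 0"
  shows "act (mk t 0 0 (1/t)) y = y"
proof -
  let ?e = "\<lambda>n::nat. 1 / (real n + 1)"
  have e0: "?e \<longlonglongrightarrow> 0" using LIMSEQ_inverse_real_of_nat by (simp add: inverse_eq_divide add.commute)
  have L1: "(\<lambda>n. dist (act (mk t (?e n) 0 (1/t)) y) y) \<longlonglongrightarrow> dist (act (mk t 0 0 (1/t)) y) y"
    apply (intro tendsto_intros cont_seq)
    using assms e0 by (auto simp: SL2_mk intro!: mk_tendsto tendsto_intros)
  have L2: "(\<lambda>n. dist (act (mk 1 (?e n) 0 1) y) y) \<longlonglongrightarrow> dist (act (mk 1 0 0 1) y) y"
    apply (intro tendsto_intros cont_seq)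
    using assms e0 by (auto simp: SL2_mk intro!: mk_tendsto tendsto_intros)
  have "(\<lambda>n. dist (act (mk t (?e n) 0 (1/t)) y) y) = (\<lambda>n. dist (act (mk 1 (?e n) 0 1) y) y)"
    using key[OF assms(1) _ assms(2)] by (intro ext) simp
  with L1 L2 have "dist (act (mk t 0 0 (1/t)) y) y = dist (act (mk 1 0 0 1) y) y"
    using LIMSEQ_unique by metis
  then show ?thesis by (simp add: mat1_mk[symmetric])
qed

lemma upper_fix:
  assumes "\<forall>s. act (mk 1 0 s 1) y = y"
  shows "act (mk 1 e 0 1) y = y"
proof (cases "e = 0")
  case True then show ?thesis by (simp add: mat1_mk[symmetric])
next
  case False
  let ?t = "\<lambda>n::nat. real n + 1"
  have eq: "dist (act (mk 1 e 0 1) y) y = dist (act (mk 1 (e / ?t n) 0 1) y) y" for n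
  proof -
    have "dist (act (mk 1 e 0 1) y) y = dist (act (mk (?t n) e 0 (1/?t n)) y) y"
      using key[OF assms False, of "?t n"] by simp
    also have "mk (?t n) e 0 (1/?t n) = mk (?t n) 0 0 (1/?t n) ** mk 1 (e / ?t n) 0 1"
      by (simp add: mk_mult)
    also have "act \<dots> y = act (mk (?t n) 0 0 (1/?t n)) (act (mk 1 (e / ?t n) 0 1) y)"
      by (rule mult) (simp_all add: SL2_mk)
    also have "dist \<dots> y = dist (act (mk (?t n) 0 0 (1/?t n)) (act (mk 1 (e / ?t n) 0 1) y)) (act (mk (?t n) 0 0 (1/?t n)) y)"
      using diag_fix[OF assms, of "?t n"] by simp
    also have "\<dots> = dist (act (mk 1 (e / ?t n) 0 1) y) y" by (rule iso) (simp add: SL2_mk)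
    finally show ?thesis .
  qed
  have e0: "(\<lambda>n. e / ?t n) \<longlonglongrightarrow> 0"
    using tendsto_mult[OF tendsto_const[of e] LIMSEQ_inverse_real_of_nat] by (simp add: divide_inverse add.commute)
  have L2: "(\<lambda>n. dist (act (mk 1 (e / ?t n) 0 1) y) y) \<longlonglongrightarrow> dist (act (mk 1 0 0 1) y) y"
    apply (intro tendsto_intros cont_seq)
    using e0 by (auto simp: SL2_mk intro!: mk_tendsto tendsto_intros)
  then have "dist (act (mk 1 e 0 1) y) y = 0"
    unfolding eq[symmetric] mat1_mk[symmetric] by (simp add: LIMSEQ_const_iff)
  then show ?thesis by simp
qed

lemma fixall:
  assumes "\<forall>s. act (mk 1 0 s 1) y = y" "g \<in> SL2"
  shows "act g y = y"
proof -
  have gen: "act (mk a b c d) y = y" if "a*d - b*c = 1" "c \<noteq> 0" for a b c d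
  proof -
    have "mk a b c d = mk 1 ((a-1)/c) 0 1 ** (mk 1 0 c 1 ** mk 1 ((d-1)/c) 0 1)"
      using that by (simp add: mk_mult mk_eq_iff field_simps)
    then have "act (mk a b c d) y = act (mk 1 ((a-1)/c) 0 1) (act (mk 1 0 c 1) (act (mk 1 ((d-1)/c) 0 1) y))"
      using mult[of "mk 1 ((a-1)/c) 0 1" "mk 1 0 c 1 ** mk 1 ((d-1)/c) 0 1"] mult[of "mk 1 0 c 1" "mk 1 ((d-1)/c) 0 1"]
      by (simp add: SL2_mk mk_mult)
    then show ?thesis using upper_fix assms(1) by simp
  qed
  obtain a b c d where g: "g = mk a b c d" using mk_eta by metis
  with assms have det: "a*d - b*c = 1" by (simp add: SL2_mk)
  show ?thesis
  proof (cases "c = 0")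
    case False then show ?thesis using gen det g by simp
  next
    case True
    then have a0: "a \<noteq> 0" using det by auto
    have "g = mk 1 0 (-1) 1 ** mk a b (a+c) (b+d)" using g by (simp add: mk_mult)
    then have "act g y = act (mk 1 0 (-1) 1) (act (mk a b (a+c) (b+d)) y)"
      using det by (simp add: mult SL2_mk algebra_simps)
    also have "act (mk a b (a+c) (b+d)) y = y"
    proof (rule gen)
      show "a*(b+d) - b*(a+c) = 1" using det True by (simp add: algebra_simps)
    qed (use True a0 in simp)
    finally show ?thesis using assms(1) by simp
  qed
qed

end


definition u :: "real \<Rightarrow> real \<Rightarrow> real \<Rightarrow> real^2^2" where
  "u s p1 p2 = mk (1 - s*p1*p2) (-s*p2^2) (s*p1^2) (1 + s*p1*p2)"

lemma u_SL2: "u s p1 p2 \<in> SL2"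
  by (simp add: u_def SL2_mk algebra_simps power2_eq_square)

lemma closed_SL2: "closed SL2"
proof -
  have "SL2 = {A::real^2^2. A$1$1 * A$2$2 - A$1$2 * A$2$1 = 1}"
    by (simp add: SL2_def det_2)
  also have "closed \<dots>" by (intro closed_Collect_eq continuous_intros)
  finally show ?thesis .
qed

context sl2act begin

lemma conj_fix:
  assumes unit: "p1^2 + p2^2 = 1" and fx: "\<forall>s. act (u s p1 p2) x0 = x0" and g: "g \<in> SL2"
  shows "act g x0 = x0"
proof -
  define L where "L = mk p1 p2 (-p2) p1"
  define Li where "Li = mk p1 (-p2) p2 p1"
  have LS: "L \<in> SL2" "Li \<in> SL2" using unit by (simp_all add: L_def Li_def SL2_mk power2_eq_square)
  have LiL: "Li ** L = mat 1" using unit by (simp add: L_def Li_def mk_mult mat1_mk power2_eq_square algebra_simps)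
  define y where "y = act L x0"
  have "act (mk 1 0 s 1) y = y" for s
  proof -
    have e: "mk 1 0 s 1 ** L = L ** u s p1 p2"
      using unit unfolding L_def u_def mk_mult mk_eq_iff
      by (simp add: algebra_simps power2_eq_square) (metis (no_types, lifting) add_diff_cancel_left' add_diff_eq cancel_ab_semigroup_add_class.diff_right_commute distrib_left mult.commute mult.left_commute mult_1)
    have "act (mk 1 0 s 1) y = act (mk 1 0 s 1 ** L) x0" unfolding y_def by (rule mult[symmetric]) (simp_all add: SL2_mk LS)
    also have "\<dots> = act L (act (u s p1 p2) x0)" unfolding e by (rule mult) (simp_all add: LS u_SL2)
    finally show ?thesis using fx y_def by simp
  qed
  then have fy: "\<forall>g\<in>SL2. act g y = y" using fixall by blast
  have LgS: "L ** g ** Li \<in> SL2" using LS g by (simp add: SL2_def det_mul)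
  have "act g x0 = act (Li ** L) (act g x0)" by (simp add: LiL)
  also have "\<dots> = act Li (act L (act g x0))" by (rule mult) (simp_all add: LS)
  also have "act L (act g x0) = act (L ** g) x0" by (rule mult[symmetric]) (simp_all add: LS g)
  also have "L ** g = (L ** g ** Li) ** L" by (simp add: matrix_mul_assoc[symmetric] LiL matrix_mul_rid)
  also have "act \<dots> x0 = act (L ** g ** Li) y" unfolding y_def by (rule mult) (simp_all add: LS LgS)
  also have "\<dots> = y" using fy LgS by simp
  also have "act Li y = act (Li ** L) x0" unfolding y_def by (rule mult[symmetric]) (simp_all add: LS)
  finally show ?thesis by (simp add: LiL)
qed

lemma conj_dist:
  assumes "a*d - b*c = 1" "act (mk a b c d) x0 = x0" "v \<in> SL2"
  shows "dist (act v x0) x0 = dist (act (mk a b c d ** v ** mk d (-b) (-c) a) x0) x0"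
proof -
  let ?h = "mk a b c d" and ?hi = "mk d (-b) (-c) a"
  have hS: "?h \<in> SL2" "?hi \<in> SL2" using assms by (simp_all add: SL2_mk algebra_simps)
  have hih: "?hi ** ?h = mat 1" using assms by (simp add: mk_mult mat1_mk algebra_simps)
  have cS: "?h ** v ** ?hi \<in> SL2" using hS assms(3) by (simp add: SL2_def det_mul)
  have "act (?h ** v ** ?hi) x0 = act (?h ** v ** ?hi) (act ?h x0)" using assms by simp
  also have "\<dots> = act ((?h ** v ** ?hi) ** ?h) x0" by (rule mult[symmetric]) (simp_all add: cS hS)
  also have "(?h ** v ** ?hi) ** ?h = ?h ** v" by (simp add: matrix_mul_assoc[symmetric] hih matrix_mul_rid)
  also have "act \<dots> x0 = act ?h (act v x0)" by (rule mult) (simp_all add: hS assms)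
  finally have "dist (act (?h ** v ** ?hi) x0) x0 = dist (act ?h (act v x0)) (act ?h x0)" using assms by simp
  also have "\<dots> = dist (act v x0) x0" by (rule iso) (simp add: hS)
  finally show ?thesis by simp
qed

lemma u_sqrt:
  assumes "r > 0"
  shows "u s (a / sqrt r) (b / sqrt r) = mk (1 - s*a*b/r) (-s*b^2/r) (s*a^2/r) (1 + s*a*b/r)"
proof -
  have "sqrt r * sqrt r = r" using assms by simp
  then show ?thesis using assms unfolding u_def by (simp add: power_divide mk_eq_iff field_simps power2_eq_square)
qed

definition F :: "real \<Rightarrow> real \<Rightarrow> 'x \<Rightarrow> real" where
  "F s \<rho> x = dist (act (mk 1 0 (s/\<rho>) 1) x) x + dist (act (mk 1 (-s/\<rho>) 0 1) x) x"

lemma stab_step: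
  assumes det: "a*d - b*c = 1" and fx: "act (mk a b c d) x0 = x0" and big: "a^2+b^2+c^2+d^2 > 4*N" and N0: "N \<ge> 0"
  shows "\<exists>p::real^2. \<exists>\<rho>. norm p = 1 \<and> \<rho> > N \<and> \<rho> > 0 \<and> (\<forall>s. dist (act (u s (p$1) (p$2)) x0) x0 \<le> F s \<rho> x0)"
proof (cases "a^2+b^2 \<ge> c^2+d^2")
  case True
  define r where "r = a^2+b^2"
  have r0: "r > 0" "r > N" using True big N0 unfolding r_def by linarith+
  define p :: "real^2" where "p = vector [a / sqrt r, b / sqrt r]"
  have np: "norm p = 1" using r0 unfolding p_def r_def
    by (simp add: norm_vec_def L2_set_def sum_2 power_divide add_divide_distrib[symmetric]) auto
  have "dist (act (u s (p$1) (p$2)) x0) x0 \<le> F s r x0" for s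
  proof -
    have "dist (act (u s (p$1) (p$2)) x0) x0 = dist (act (mk a b c d ** u s (p$1) (p$2) ** mk d (-b) (-c) a) x0) x0"
      by (rule conj_dist[OF det fx u_SL2])
    also have "mk a b c d ** u s (p$1) (p$2) ** mk d (-b) (-c) a = mk 1 0 (s/r) 1"
      unfolding p_def vector_2 u_sqrt[OF r0(1)] mk_mult mk_eq_iff
      using det r0 by (simp add: r_def field_simps power2_eq_square) (simp add: add_divide_distrib[symmetric], algebra)
    finally have "dist (act (u s (p$1) (p$2)) x0) x0 = dist (act (mk 1 0 (s/r) 1) x0) x0" .
    then show ?thesis unfolding F_def by simp
  qed
  then show ?thesis using np r0 by blast
next
  case False
  define r where "r = c^2+d^2"
  have r0: "r > 0" "r > N" using False big N0 unfolding r_def by linarith+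
  define p :: "real^2" where "p = vector [c / sqrt r, d / sqrt r]"
  have np: "norm p = 1" using r0 unfolding p_def r_def
    by (simp add: norm_vec_def L2_set_def sum_2 power_divide add_divide_distrib[symmetric]) auto
  have "dist (act (u s (p$1) (p$2)) x0) x0 \<le> F s r x0" for s
  proof -
    have "dist (act (u s (p$1) (p$2)) x0) x0 = dist (act (mk a b c d ** u s (p$1) (p$2) ** mk d (-b) (-c) a) x0) x0"
      by (rule conj_dist[OF det fx u_SL2])
    also have "mk a b c d ** u s (p$1) (p$2) ** mk d (-b) (-c) a = mk 1 (-s/r) 0 1"
      unfolding p_def vector_2 u_sqrt[OF r0(1)] mk_mult mk_eq_iff
      using det r0 by (simp add: r_def field_simps power2_eq_square) (simp add: add_divide_distrib[symmetric], algebra)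
    finally have "dist (act (u s (p$1) (p$2)) x0) x0 = dist (act (mk 1 (-s/r) 0 1) x0) x0" .
    then show ?thesis unfolding F_def by simp
  qed
  then show ?thesis using np r0 by blast
qed

end


theorem theorem1p5:
  fixes act :: "real^2^2 \<Rightarrow> 'x::metric_space \<Rightarrow> 'x" and x0 :: 'x
  assumes "continuous_isometric_SL2_action act"
  shows "(\<forall>g\<in>SL2. act g x0 = x0) \<or> compact (stabilizer act x0)"
proof -
  interpret sl2act act by (rule sl2act.intro) (rule assms)
  show ?thesis
  proof (rule ccontr)
    assume H: "\<not> ((\<forall>g\<in>SL2. act g x0 = x0) \<or> compact (stabilizer act x0))"
    then have nfix: "\<not> (\<forall>g\<in>SL2. act g x0 = x0)" and nc: "\<not> compact (stabilizer act x0)" by auto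
    have cl: "closed (stabilizer act x0)" unfolding stabilizer_def
      by (rule continuous_closed_preimage_constant[OF cont_on closed_SL2])
    then have "\<not> bounded (stabilizer act x0)" using nc compact_eq_bounded_closed by blast
    then have unb: "\<forall>n::nat. \<exists>h\<in>stabilizer act x0. norm h > 2 * real n"
      unfolding bounded_iff by (meson not_le)
    have ex: "\<exists>p::real^2. \<exists>\<rho>. norm p = 1 \<and> \<rho> > real n \<and> \<rho> > 0 \<and>
                (\<forall>s. dist (act (u s (p$1) (p$2)) x0) x0 \<le> F s \<rho> x0)" for n
    proof -
      obtain h where h: "h \<in> stabilizer act x0" "norm h > 2 * real n" using unb by blast
      obtain a b c d where hd: "h = mk a b c d" using mk_eta by metis
      have det: "a*d - b*c = 1" and fx: "act (mk a b c d) x0 = x0"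
        using h hd by (auto simp: stabilizer_def SL2_mk)
      define S where "S = a^2+b^2+c^2+d^2"
      have S0: "S \<ge> 0" unfolding S_def by simp
      have "sqrt S > 2 * real n" using h hd norm_mk S_def by simp
      then have "(2 * real n)^2 < (sqrt S)^2" by (intro power_strict_mono) auto
      then have "4 * (real n)^2 < S" using S0 by (simp add: power_mult_distrib)
      moreover have "real n \<le> (real n)^2"
        by (simp add: power2_eq_square) (metis of_nat_mult of_nat_le_iff le_square)
      ultimately have big: "S > 4 * real n" by linarith
      show ?thesis using stab_step[OF det fx big[unfolded S_def]] by simp
    qed
    obtain P :: "nat \<Rightarrow> real^2" and R :: "nat \<Rightarrow> real" where PR: "\<And>n. norm (P n) = 1" "\<And>n. R n > real n" "\<And>n. R n > 0"
      "\<And>n s. dist (act (u s (P n $1) (P n $2)) x0) x0 \<le> F s (R n) x0"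
      using ex by metis
    have "seq_compact (sphere (0::real^2) 1)" by (rule compact_imp_seq_compact[OF compact_sphere])
    then obtain l r where l: "l \<in> sphere 0 1" "strict_mono r" "(P \<circ> r) \<longlonglongrightarrow> l"
      using PR(1) by (elim seq_compactE) auto
    have l1: "(l$1)^2 + (l$2)^2 = 1" using l(1) by (simp add: norm_vec_def L2_set_def sum_2)
    have Pl: "(\<lambda>n. P (r n)) \<longlonglongrightarrow> l" using l(3) by (simp add: o_def)
    have c1: "(\<lambda>n. P (r n) $ 1) \<longlonglongrightarrow> l$1" by (rule tendsto_vec_nth[OF Pl])
    have c2: "(\<lambda>n. P (r n) $ 2) \<longlonglongrightarrow> l$2" by (rule tendsto_vec_nth[OF Pl])
    have Rtop: "filterlim (\<lambda>n. R (r n)) at_top sequentially"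
    proof (rule filterlim_at_top_mono[OF filterlim_real_sequentially])
      show "\<forall>\<^sub>F n in sequentially. real n \<le> R (r n)"
      proof (intro always_eventually allI)
        fix n
        have "real n \<le> real (r n)" using seq_suble[OF l(2), of n] by simp
        then show "real n \<le> R (r n)" using PR(2)[of "r n"] by linarith
      qed
    qed
    have fixu: "act (u s (l$1) (l$2)) x0 = x0" for s
    proof -
      let ?D = "\<lambda>n. dist (act (u s (P (r n) $1) (P (r n) $2)) x0) x0"
      have um: "(\<lambda>n. u s (P (r n) $1) (P (r n) $2)) \<longlonglongrightarrow> u s (l$1) (l$2)"
        unfolding u_def by (intro mk_tendsto tendsto_intros c1 c2)
      have D: "?D \<longlonglongrightarrow> dist (act (u s (l$1) (l$2)) x0) x0"
        by (intro tendsto_dist tendsto_const cont_seq[OF u_SL2 um u_SL2])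
      have z1: "(\<lambda>n. s / R (r n)) \<longlonglongrightarrow> 0"
        by (rule tendsto_divide_0[OF tendsto_const filterlim_at_top_imp_at_infinity[OF Rtop]])
      have z2: "(\<lambda>n. -s / R (r n)) \<longlonglongrightarrow> 0"
        by (rule tendsto_divide_0[OF tendsto_const filterlim_at_top_imp_at_infinity[OF Rtop]])
      have G: "(\<lambda>n. F s (R (r n)) x0) \<longlonglongrightarrow> dist (act (mk 1 0 0 1) x0) x0 + dist (act (mk 1 0 0 1) x0) x0"
        unfolding F_def
        by (intro tendsto_add tendsto_dist tendsto_const cont_seq mk_tendsto z1 z2) (auto simp: SL2_mk)
      have "dist (act (u s (l$1) (l$2)) x0) x0 \<le> dist (act (mk 1 0 0 1) x0) x0 + dist (act (mk 1 0 0 1) x0) x0"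
        by (rule LIMSEQ_le[OF D G]) (use PR(4) in auto)
      then show ?thesis by (simp add: mat1_mk[symmetric])
    qed
    have "\<forall>g\<in>SL2. act g x0 = x0" using conj_fix[OF l1] fixu by blast
    with nfix show False by simp
  qed
qed

end
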